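(* Let $c\in[0,1]$ and $\rho>\max(c,1-c)$. Let $\{G_\iota:\iota\in I\}$ be a bounded family in the space $\mathcal H(D_{\mathbb C}(c,\rho))$ of holomorphic functions on the open disc $D_{\mathbb C}(c,\rho)=\{z\in\mathbb C:|z-c|<\rho\}$ (bounded for the topology of uniform convergence on compact subsets). Let $\{\boldsymbol\epsilon_{\iota'}=(\epsilon_{\iota',N})_{N\ge1}:\iota'\in I'\}$ be a family of sequences with $\epsilon_{\iota',N}\in[0,1]$ such that $\sup_{\iota'\in I'}\epsilon_{\iota',N}\to0$ as $N\to\infty$. Then for every $\iota\in I$ and $\iota'\in I'$ the sequence of polynomials $$P_N^{\iota,\iota'}(z)=\sum_{\nu=0}^N\binom{N}{\nu}z^\nu(1-z)^{N-\nu}\,G_\iota\Big(\nu\,\frac{1-\epsilon_{\iota',N}}{N}\Big),\qquad N\ge1,$$ converges to $G_\iota$ uniformly on every compact subset of $D_{\mathbb C}(c,\rho)$, and on each compact subset of $D_{\mathbb C}(c,\rho)$ this convergence is uniform with respect to both $\iota\in I$ and $\iota'\in I'$. *)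

theory Defs
  imports "HOL-Analysis.Analysis"
begin

definition bernstein_poly :: "(complex \<Rightarrow> complex) \<Rightarrow> real \<Rightarrow> nat \<Rightarrow> complex \<Rightarrow> complex" where
  "bernstein_poly G eps N z =
     (\<Sum>\<nu>=0..N. of_nat (N choose \<nu>) * z ^ \<nu> * (1 - z) ^ (N - \<nu>)
                 * G (complex_of_real (real \<nu> * (1 - eps) / real N)))"

text \<open>A family of functions indexed by I is bounded in H(U) (topology of
  uniform convergence on compacta) iff it is uniformly bounded on each compact K in U.\<close>
definition bounded_family_on :: "'i set \<Rightarrow> ('i \<Rightarrow> complex \<Rightarrow> complex) \<Rightarrow> complex set \<Rightarrow> bool" where
  "bounded_family_on I G U \<longleftrightarrow>
     (\<forall>K. compact K \<and> K \<subseteq> U \<longrightarrow> (\<exists>B. \<forall>\<iota>\<in>I. \<forall>z\<in>K. norm (G \<iota> z) \<le> B))"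

end

theory Submission imports Defs "HOL-Complex_Analysis.Complex_Analysis"
begin

lemma mu_rec:
  fixes z u v :: complex
  shows "z * u ^(Suc (Suc j)) + (1-z) * v ^(Suc (Suc j)) =
     (u+v) * (z * u ^(Suc j) + (1-z) * v ^(Suc j)) - u * v * (z * u ^j + (1-z) * v ^j)"
  by (simp add: algebra_simps)

lemma quad_ineq:
  fixes u v q :: real
  assumes "u * v \<le> 0" "\<bar>u\<bar> \<le> q" "\<bar>v\<bar> \<le> q"
  shows "\<bar>u+v\<bar> * q + \<bar>u * v\<bar> \<le> q * q"
proof -
  define a where "a = \<bar>u\<bar>"
  define b where "b = \<bar>v\<bar>"
  have e1: "\<bar>u+v\<bar> = \<bar>a - b\<bar>" unfolding a_def b_def using assms(1)
    by (auto simp: abs_if mult_le_0_iff)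
  have e2: "\<bar>u * v\<bar> = a * b" unfolding a_def b_def by (simp add: abs_mult)
  have aq: "a \<le> q" "b \<le> q" "0 \<le> a" "0 \<le> b" using assms unfolding a_def b_def by auto
  show ?thesis
  proof (cases "a \<ge> b")
    case True
    have "0 \<le> (q - a) * (q + b)" using aq by (intro mult_nonneg_nonneg) auto
    then show ?thesis using True unfolding e1 e2 by (simp add: algebra_simps)
  next
    case False
    have "0 \<le> (q - b) * (q + a)" using aq by (intro mult_nonneg_nonneg) auto
    then show ?thesis using False unfolding e1 e2 by (simp add: algebra_simps)
  qed
qed

lemma mu_bound:
  fixes z :: complex and u v q :: real
  assumes uv: "u * v \<le> 0" and qu: "\<bar>u\<bar> \<le> q" and qv: "\<bar>v\<bar> \<le> q"
    and q1: "cmod (z * of_real u + (1-z) * of_real v) \<le> q"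
  shows "cmod (z * of_real u ^ j + (1-z) * of_real v ^ j) \<le> q^j"
proof -
  have q0: "0 \<le> q" using qu by linarith
  have "cmod (z * of_real u ^ j + (1-z) * of_real v ^ j) \<le> q^j \<and>
        cmod (z * of_real u ^ Suc j + (1-z) * of_real v ^ Suc j) \<le> q^Suc j"
  proof (induction j)
    case 0
    then show ?case using q1 by simp
  next
    case (Suc j)
    let ?m = "\<lambda>j. z * complex_of_real u ^ j + (1-z) * complex_of_real v ^ j"
    have "cmod (?m (Suc (Suc j))) = cmod ((of_real (u+v)) * ?m (Suc j) - of_real (u * v) * ?m j)"
      by (subst mu_rec) simp
    also have "\<dots> \<le> \<bar>u+v\<bar> * cmod (?m (Suc j)) + \<bar>u * v\<bar> * cmod (?m j)"
      by (rule order_trans[OF norm_triangle_ineq4]) (simp only: norm_mult norm_of_real order_refl)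
    also have "\<dots> \<le> \<bar>u+v\<bar> * q^Suc j + \<bar>u * v\<bar> * q^j"
      using Suc.IH by (intro add_mono mult_left_mono) auto
    also have "\<dots> = (\<bar>u+v\<bar> * q + \<bar>u * v\<bar>) * q^j" by (simp add: algebra_simps)
    also have "\<dots> \<le> (q * q) * q^j"
      using quad_ineq[OF uv qu qv] q0 by (intro mult_right_mono) auto
    also have "\<dots> = q^Suc (Suc j)" by simp
    finally show ?case using Suc.IH by simp
  qed
  then show ?thesis by simp
qed

definition W :: "complex \<Rightarrow> nat \<Rightarrow> nat \<Rightarrow> complex" where
  "W z n j = of_nat (n choose j) * z ^ j * (1 - z) ^ (n - j)"

lemma W_pascal:
  "(\<Sum>j\<le>Suc n. W z (Suc n) j * f j) = (\<Sum>j\<le>n. W z n j * (z * f (Suc j) + (1 - z) * f j))"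
proof -
  have t: "of_nat (n choose Suc i) * z ^ Suc i * (1 - z) ^ (n - i) * f (Suc i)
      = (1 - z) * (W z n (Suc i) * f (Suc i))" if "i \<le> n" for i
  proof (cases "i = n")
    case True then show ?thesis by (simp add: W_def)
  next
    case False
    then have "n - i = Suc (n - Suc i)" using that by arith
    then show ?thesis by (simp add: W_def algebra_simps)
  qed
  have "(\<Sum>j\<le>Suc n. W z (Suc n) j * f j) = W z (Suc n) 0 * f 0 + (\<Sum>i\<le>n. W z (Suc n) (Suc i) * f (Suc i))"
    by (rule sum.atMost_Suc_shift)
  also have "(\<Sum>i\<le>n. W z (Suc n) (Suc i) * f (Suc i)) =
      (\<Sum>i\<le>n. z * (W z n i * f (Suc i))) + (\<Sum>i\<le>n. of_nat (n choose Suc i) * z ^ Suc i * (1 - z) ^ (n - i) * f (Suc i))"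
    by (simp add: W_def sum.distrib[symmetric] algebra_simps)
  also have "(\<Sum>i\<le>n. of_nat (n choose Suc i) * z ^ Suc i * (1 - z) ^ (n - i) * f (Suc i))
      = (\<Sum>i\<le>n. (1 - z) * (W z n (Suc i) * f (Suc i)))"
    using t by (intro sum.cong) auto
  also have "W z (Suc n) 0 * f 0 = (1 - z) * (W z n 0 * f 0)" by (simp add: W_def)
  finally have L: "(\<Sum>j\<le>Suc n. W z (Suc n) j * f j) = z * (\<Sum>i\<le>n. W z n i * f (Suc i))
      + (1 - z) * (W z n 0 * f 0 + (\<Sum>i\<le>n. W z n (Suc i) * f (Suc i)))"
    by (simp add: sum_distrib_left algebra_simps)
  have "(\<Sum>j\<le>n. W z n j * f j) = (\<Sum>j\<le>Suc n. W z n j * f j)"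
    by (simp add: W_def)
  also have "\<dots> = W z n 0 * f 0 + (\<Sum>i\<le>n. W z n (Suc i) * f (Suc i))"
    by (rule sum.atMost_Suc_shift)
  finally have R: "(\<Sum>j\<le>n. W z n j * f j) = W z n 0 * f 0 + (\<Sum>i\<le>n. W z n (Suc i) * f (Suc i))" .
  have "(\<Sum>j\<le>n. W z n j * (z * f (Suc j) + (1 - z) * f j))
      = (\<Sum>j\<le>n. z * (W z n j * f (Suc j)) + (1 - z) * (W z n j * f j))"
    by (intro sum.cong) (simp_all add: algebra_simps)
  also have "\<dots> = z * (\<Sum>j\<le>n. W z n j * f (Suc j)) + (1 - z) * (\<Sum>j\<le>n. W z n j * f j)"
    by (simp only: sum.distrib sum_distrib_left)
  finally show ?thesis unfolding L R[symmetric] by simp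
qed

definition Mm :: "complex \<Rightarrow> complex \<Rightarrow> complex \<Rightarrow> nat \<Rightarrow> nat \<Rightarrow> complex" where
  "Mm z u v n k = (\<Sum>j\<le>n. W z n j * (of_nat j * u + of_nat (n - j) * v) ^ k)"

definition mu :: "complex \<Rightarrow> complex \<Rightarrow> complex \<Rightarrow> nat \<Rightarrow> complex" where
  "mu z u v i = z * u ^ i + (1 - z) * v ^ i"

lemma Mm_0: "Mm z u v 0 k = 0 ^ k"
  by (simp add: Mm_def W_def)

lemma mu_0: "mu z u v 0 = 1"
  by (simp add: mu_def)

lemma Mm_rec:
  "Mm z u v (Suc n) k = (\<Sum>i\<le>k. of_nat (k choose i) * mu z u v i * Mm z u v n (k - i))"
proof -
  define S where "S j = of_nat j * u + of_nat (n - j) * v" for j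
  have "Mm z u v (Suc n) k = (\<Sum>j\<le>n. W z n j * (z * (u + S j) ^ k + (1 - z) * (v + S j) ^ k))"
    unfolding Mm_def W_pascal
  proof (intro sum.cong refl)
    fix j assume j: "j \<in> {..n}"
    then have "Suc n - j = Suc (n - j)" by auto
    then show "W z n j * (z * (of_nat (Suc j) * u + of_nat (Suc n - Suc j) * v) ^ k +
          (1 - z) * (of_nat j * u + of_nat (Suc n - j) * v) ^ k) =
         W z n j * (z * (u + S j) ^ k + (1 - z) * (v + S j) ^ k)"
      by (simp add: S_def algebra_simps)
  qed
  also have "\<dots> = (\<Sum>j\<le>n. \<Sum>i\<le>k. of_nat (k choose i) * mu z u v i * (W z n j * S j ^ (k - i)))"
  proof (intro sum.cong refl)
    fix j
    show "W z n j * (z * (u + S j) ^ k + (1 - z) * (v + S j) ^ k) =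
        (\<Sum>i\<le>k. of_nat (k choose i) * mu z u v i * (W z n j * S j ^ (k - i)))"
      unfolding binomial_ring mu_def
      by (simp add: sum_distrib_left sum.distrib[symmetric] algebra_simps)
  qed
  also have "\<dots> = (\<Sum>i\<le>k. \<Sum>j\<le>n. of_nat (k choose i) * mu z u v i * (W z n j * S j ^ (k - i)))"
    by (rule sum.swap)
  also have "\<dots> = (\<Sum>i\<le>k. of_nat (k choose i) * mu z u v i * Mm z u v n (k - i))"
    by (simp add: Mm_def S_def sum_distrib_left)
  finally show ?thesis .
qed

lemma Mm_bound:
  assumes mub: "\<And>i. cmod (mu z u v i) \<le> q0 ^ i" and q0: "0 \<le> q0"
  shows "cmod (Mm z u v n k) \<le> (real n * q0) ^ k"
proof (induction n arbitrary: k)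
  case 0
  then show ?case by (cases k) (simp_all add: Mm_0)
next
  case (Suc n)
  have "cmod (Mm z u v (Suc n) k) \<le> (\<Sum>i\<le>k. cmod (of_nat (k choose i) * mu z u v i * Mm z u v n (k - i)))"
    unfolding Mm_rec by (rule norm_sum)
  also have "\<dots> \<le> (\<Sum>i\<le>k. of_nat (k choose i) * q0 ^ i * (real n * q0) ^ (k - i))"
  proof (intro sum_mono)
    fix i
    show "cmod (of_nat (k choose i) * mu z u v i * Mm z u v n (k - i)) \<le> of_nat (k choose i) * q0 ^ i * (real n * q0) ^ (k - i)"
      unfolding norm_mult norm_of_nat
      using mub[of i] Suc.IH[of "k - i"] q0
      by (intro mult_mono) (auto intro!: mult_nonneg_nonneg)
  qed
  also have "\<dots> = (q0 + real n * q0) ^ k"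
    by (simp add: binomial_ring)
  also have "\<dots> = (real (Suc n) * q0) ^ k" by (simp add: algebra_simps)
  finally show ?case .
qed


definition ff :: "nat \<Rightarrow> nat \<Rightarrow> nat" where
  "ff n k = (\<Prod>i<k. n - i)"

lemma ff_0 [simp]: "ff n 0 = 1" by (simp add: ff_def)

lemma ff_Suc_Suc: "ff (Suc n) (Suc k) = Suc n * ff n k"
  unfolding ff_def prod.lessThan_Suc_shift by simp

lemma ff_Suc2: "ff n (Suc k) = ff n k * (n - k)"
  by (simp add: ff_def)

lemma ff_pascal: "ff (Suc n) (Suc k) = ff n (Suc k) + Suc k * ff n k"
proof (cases "k \<le> n")
  case True
  then have e: "Suc n = (n - k) + Suc k" by arith
  have "Suc n * ff n k = ((n - k) + Suc k) * ff n k" by (simp only: e)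
  also have "\<dots> = ff n k * (n - k) + Suc k * ff n k" by (simp add: algebra_simps)
  finally show ?thesis by (simp only: ff_Suc_Suc ff_Suc2[of n k])
next
  case False
  then have "n \<in> {..<k}" by simp
  then have "ff n k = 0" unfolding ff_def
    by (intro prod_zero) (auto intro: bexI[where x=n])
  then show ?thesis by (simp only: ff_Suc_Suc ff_Suc2[of n k])
qed

lemma ff_le: "ff n k \<le> n ^ k"
proof -
  have "(\<Prod>i<k. n - i) \<le> (\<Prod>i<k. n)" by (intro prod_mono) auto
  then show ?thesis by (simp add: ff_def)
qed

lemma D_bound:
  assumes mub: "\<And>i. cmod (mu z u v i) \<le> q0 ^ i" and q0: "0 \<le> q0"
  shows "cmod (Mm z u v n k - (of_nat n * mu z u v 1) ^ k) \<le> 2 * q0 ^ k * (real n ^ k - real (ff n k))"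
proof (induction n arbitrary: k)
  case 0
  then show ?case by (cases k) (simp_all add: Mm_0 ff_def)
next
  case (Suc n)
  let ?m = "mu z u v"
  define g where "g i = (if i = 0 then real n ^ k - real (ff n k) else if i = 1 then real n ^ (k - 1) - real (ff n (k - 1))
     else real n ^ (k - i))" for i
  have sumg: "(\<Sum>i\<le>k. of_nat (k choose i) * g i) = real (Suc n) ^ k - real (ff (Suc n) k)"
  proof (cases k)
    case 0
    then show ?thesis by (simp add: g_def)
  next
    case (Suc k')
    have g_eq: "g i = real n ^ (k - i) - (if i = 0 then real (ff n k) else if i = 1 then real (ff n k') else 0)" for i
      by (simp add: g_def Suc)
    have "(\<Sum>i\<le>k. of_nat (k choose i) * g i) = (\<Sum>i\<le>k. of_nat (k choose i) * real n ^ (k - i))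
        - (\<Sum>i\<le>k. of_nat (k choose i) * (if i = 0 then real (ff n k) else if i = 1 then real (ff n k') else 0))"
      unfolding g_eq by (simp only: right_diff_distrib sum_subtractf)
    also have "(\<Sum>i\<le>k. of_nat (k choose i) * real n ^ (k - i)) = (1 + real n) ^ k"
      unfolding binomial_ring[of "1::real" "real n" k] by simp
    also have "(\<Sum>i\<le>k. of_nat (k choose i) * (if i = 0 then real (ff n k) else if i = 1 then real (ff n k') else 0))
        = (\<Sum>i\<le>k. (if i = 0 then real (ff n k) else 0) + (if i = 1 then real k * real (ff n k') else 0))"
      by (intro sum.cong) auto
    also have "\<dots> = real (ff n k) + real k * real (ff n k')"
      unfolding sum.distrib using Suc by (simp add: sum.delta)
    also have "real (ff n k) + real k * real (ff n k') = real (ff (Suc n) k)"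
      by (simp only: Suc ff_pascal of_nat_add of_nat_mult)
    finally show ?thesis by simp
  qed
  have m1: "cmod (?m 1) \<le> q0" using mub[of 1] by simp
  have Mb: "cmod (Mm z u v n j) \<le> (real n * q0) ^ j" for j using Mm_bound[OF mub q0] .
  have p1: "cmod ((of_nat n * ?m 1) ^ j) \<le> (real n * q0) ^ j" for j
    unfolding norm_power norm_mult norm_of_nat using m1 q0 by (intro power_mono mult_left_mono) simp_all
  have "Mm z u v (Suc n) k - (of_nat (Suc n) * ?m 1) ^ k =
      (\<Sum>i\<le>k. of_nat (k choose i) * (?m i * Mm z u v n (k - i) - ?m 1 ^ i * (of_nat n * ?m 1) ^ (k - i)))"
  proof -
    have "(of_nat (Suc n) * ?m 1) ^ k = (?m 1 + of_nat n * ?m 1) ^ k" by (simp add: algebra_simps)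
    also have "\<dots> = (\<Sum>i\<le>k. of_nat (k choose i) * ?m 1 ^ i * (of_nat n * ?m 1) ^ (k - i))"
      by (rule binomial_ring)
    finally show ?thesis unfolding Mm_rec
      by (simp only: right_diff_distrib sum_subtractf mult.assoc)
  qed
  also have "cmod \<dots> \<le> (\<Sum>i\<le>k. of_nat (k choose i) * (2 * q0 ^ k * g i))"
  proof (rule order_trans[OF norm_sum], intro sum_mono)
    fix i assume i: "i \<in> {..k}"
    have "cmod (?m i * Mm z u v n (k - i) - ?m 1 ^ i * (of_nat n * ?m 1) ^ (k - i)) \<le> 2 * q0 ^ k * g i"
    proof (cases "i = 0")
      case True
      then show ?thesis using Suc.IH[of k] by (simp add: g_def mu_0)
    next
      case False
      show ?thesis
      proof (cases "i = 1")
        case True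
        have "cmod (?m i * Mm z u v n (k - i) - ?m 1 ^ i * (of_nat n * ?m 1) ^ (k - i))
            = cmod (?m 1) * cmod (Mm z u v n (k - 1) - (of_nat n * ?m 1) ^ (k - 1))"
          unfolding True by (simp add: norm_mult[symmetric] right_diff_distrib)
        also have "\<dots> \<le> q0 * (2 * q0 ^ (k - 1) * (real n ^ (k - 1) - real (ff n (k - 1))))"
          using Suc.IH[of "k - 1"] m1 q0 by (intro mult_mono) auto
        also have "\<dots> = 2 * q0 ^ k * g i"
          using i True by (cases k) (auto simp: g_def)
        finally show ?thesis .
      next
        case F1: False
        have "cmod (?m i * Mm z u v n (k - i) - ?m 1 ^ i * (of_nat n * ?m 1) ^ (k - i))
            \<le> cmod (?m i) * cmod (Mm z u v n (k - i)) + cmod (?m 1) ^ i * cmod ((of_nat n * ?m 1) ^ (k - i))"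
          by (rule order_trans[OF norm_triangle_ineq4]) (simp add: norm_mult norm_power)
        also have "\<dots> \<le> q0 ^ i * (real n * q0) ^ (k - i) + q0 ^ i * (real n * q0) ^ (k - i)"
          using mub[of i] Mb[of "k - i"] m1 p1[of "k - i"] q0
          by (intro add_mono mult_mono power_mono) auto
        also have "\<dots> = 2 * q0 ^ (i + (k - i)) * real n ^ (k - i)"
          by (simp add: power_mult_distrib power_add algebra_simps)
        also have "\<dots> = 2 * q0 ^ k * g i"
          using i False F1 by (simp add: g_def)
        finally show ?thesis .
      qed
    qed
    then show "cmod (of_nat (k choose i) * (?m i * Mm z u v n (k - i) - ?m 1 ^ i * (of_nat n * ?m 1) ^ (k - i)))
        \<le> of_nat (k choose i) * (2 * q0 ^ k * g i)"
      unfolding norm_mult norm_of_nat by (intro mult_left_mono) auto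
  qed
  also have "\<dots> = 2 * q0 ^ k * (\<Sum>i\<le>k. of_nat (k choose i) * g i)"
    by (simp add: sum_distrib_left algebra_simps)
  also have "\<dots> = 2 * q0 ^ k * (real (Suc n) ^ k - real (ff (Suc n) k))"
    by (simp only: sumg)
  finally show ?case .
qed


lemma T_eq_Mm:
  fixes z :: complex and a c :: real and N :: nat
  assumes N: "N \<ge> 1"
  shows "(\<Sum>\<nu>=0..N. of_nat (N choose \<nu>) * z ^ \<nu> * (1 - z) ^ (N - \<nu>) *
            (complex_of_real (real \<nu> * a / real N) - complex_of_real c) ^ k)
       = Mm z (complex_of_real ((a - c) / real N)) (complex_of_real (- c / real N)) N k"
  unfolding Mm_def W_def atLeast0AtMost
proof (intro sum.cong refl)
  fix j assume j: "j \<in> {..N}"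
  then have jN: "j \<le> N" by simp
  have Npos: "real N \<noteq> 0" using N by simp
  have "of_nat j * complex_of_real ((a - c) / real N) + of_nat (N - j) * complex_of_real (- c / real N)
      = complex_of_real (real j * ((a - c) / real N) + real (N - j) * (- c / real N))"
    by simp
  also have "real j * ((a - c) / real N) + real (N - j) * (- c / real N) = real j * a / real N - c"
    using jN Npos by (simp add: of_nat_diff field_simps)
  finally show "of_nat (N choose j) * z ^ j * (1 - z) ^ (N - j) * (complex_of_real (real j * a / real N) - complex_of_real c) ^ k =
         of_nat (N choose j) * z ^ j * (1 - z) ^ (N - j) *
         (of_nat j * complex_of_real ((a - c) / real N) + of_nat (N - j) * complex_of_real (- c / real N)) ^ k"
    by simp
qed

lemma T_bound:
  fixes z :: complex and a c q :: real and N :: nat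
  assumes N: "N \<ge> 1" and ac: "0 \<le> c" "c \<le> a" and qa: "a - c \<le> q" "c \<le> q"
    and qz: "cmod (complex_of_real a * z - complex_of_real c) \<le> q"
  shows "cmod ((\<Sum>\<nu>=0..N. of_nat (N choose \<nu>) * z ^ \<nu> * (1 - z) ^ (N - \<nu>) *
            (complex_of_real (real \<nu> * a / real N) - complex_of_real c) ^ k)
          - (complex_of_real a * z - complex_of_real c) ^ k)
       \<le> 2 * q ^ k * (1 - real (ff N k) / real N ^ k)"
proof -
  define u where "u = (a - c) / real N"
  define v where "v = - c / real N"
  define q0 where "q0 = q / real N"
  have Np: "real N > 0" using N by simp
  have q0: "0 \<le> q0" unfolding q0_def using qa ac Np by simp
  have uv: "u * v \<le> 0" unfolding u_def v_def using ac Np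
    by (simp add: mult_nonneg_nonneg divide_nonneg_pos mult_le_0_iff)
  have uq: "\<bar>u\<bar> \<le> q0" unfolding u_def q0_def using ac qa Np by (simp add: divide_right_mono)
  have vq: "\<bar>v\<bar> \<le> q0" unfolding v_def q0_def using ac qa Np by (simp add: divide_right_mono)
  have m1: "z * complex_of_real u + (1 - z) * complex_of_real v = (complex_of_real a * z - complex_of_real c) / of_nat N"
    unfolding u_def v_def using Np by (simp add: field_simps)
  have m1q: "cmod (z * complex_of_real u + (1 - z) * complex_of_real v) \<le> q0"
    unfolding m1 q0_def norm_divide using qz Np by (simp add: divide_right_mono)
  have mub: "cmod (mu z (complex_of_real u) (complex_of_real v) i) \<le> q0 ^ i" for i
    unfolding mu_def using mu_bound[OF uv uq vq m1q] by simp
  have Nm: "of_nat N * mu z (complex_of_real u) (complex_of_real v) 1 = complex_of_real a * z - complex_of_real c"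
    unfolding mu_def using m1 Np by simp
  have "cmod (Mm z (complex_of_real u) (complex_of_real v) N k - (complex_of_real a * z - complex_of_real c) ^ k)
       \<le> 2 * q0 ^ k * (real N ^ k - real (ff N k))"
    using D_bound[OF mub q0, of N k] unfolding Nm .
  also have "2 * q0 ^ k * (real N ^ k - real (ff N k)) = 2 * q ^ k * (1 - real (ff N k) / real N ^ k)"
    unfolding q0_def using Np by (simp add: power_divide field_simps)
  finally show ?thesis unfolding T_eq_Mm[OF N] u_def v_def .
qed

lemma pow_diff_bound:
  fixes X Y :: complex and q :: real
  assumes "cmod Y \<le> q"
  shows "cmod (X ^ k - Y ^ k) \<le> (q + cmod (X - Y)) ^ k - q ^ k"
proof (induction k)
  case 0
  then show ?case by simp
next
  case (Suc k)
  have qp: "0 \<le> q + cmod (X - Y)" using assms norm_ge_zero[of Y] norm_ge_zero[of "X - Y"] by linarith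
  have X: "cmod X \<le> q + cmod (X - Y)"
    using assms norm_triangle_ineq[of Y "X - Y"] by simp
  have "X ^ Suc k - Y ^ Suc k = X * (X ^ k - Y ^ k) + (X - Y) * Y ^ k"
    by (simp add: algebra_simps)
  then have "cmod (X ^ Suc k - Y ^ Suc k) \<le> cmod X * cmod (X ^ k - Y ^ k) + cmod (X - Y) * cmod Y ^ k"
    by (metis norm_mult norm_power norm_triangle_ineq)
  also have "\<dots> \<le> (q + cmod (X - Y)) * ((q + cmod (X - Y)) ^ k - q ^ k) + cmod (X - Y) * q ^ k"
    using Suc.IH X assms qp by (intro add_mono mult_mono mult_left_mono power_mono) auto
  also have "\<dots> = (q + cmod (X - Y)) ^ Suc k - q ^ Suc k"
    by (simp add: algebra_simps)
  finally show ?case .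
qed

lemma ff_ratio_bounds: "0 \<le> real (ff N k) / real N ^ k" "real (ff N k) / real N ^ k \<le> 1"
proof -
  show "0 \<le> real (ff N k) / real N ^ k" by simp
  have "real (ff N k) \<le> real N ^ k" using ff_le[of N k] by (metis of_nat_le_iff of_nat_power)
  then show "real (ff N k) / real N ^ k \<le> 1"
    by (cases "real N ^ k = 0") (auto simp: divide_le_eq_1)
qed

lemma ff_ratio_lim: "(\<lambda>N. real (ff N k) / real N ^ k) \<longlonglongrightarrow> 1"
proof -
  have e: "real (ff N k) / real N ^ k = (\<Prod>i<k. real (N - i) / real N)" for N
    unfolding ff_def prod_dividef by (simp add: of_nat_prod)
  have l: "(\<lambda>N. real (N - i) / real N) \<longlonglongrightarrow> 1" for i
  proof -
    have "(\<lambda>N. 1 - real i / real N) \<longlonglongrightarrow> 1 - 0"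
      by (intro tendsto_intros)
    moreover have "eventually (\<lambda>N. 1 - real i / real N = real (N - i) / real N) sequentially"
      using eventually_ge_at_top[of "Suc i"]
      by eventually_elim (simp add: of_nat_diff field_simps)
    ultimately show ?thesis by (simp add: tendsto_cong)
  qed
  have "(\<lambda>N. \<Prod>i<k. real (N - i) / real N) \<longlonglongrightarrow> (\<Prod>i<k. 1::real)"
    by (intro tendsto_prod l)
  then show ?thesis unfolding e by simp
qed

lemma tail_lim:
  fixes x :: real
  assumes "0 \<le> x" "x < 1"
  shows "(\<lambda>N. \<Sum>k. x ^ k * (1 - real (ff N k) / real N ^ k)) \<longlonglongrightarrow> 0"
proof -
  have lim: "((\<lambda>N. x ^ k * (1 - real (ff N k) / real N ^ k)) \<longlongrightarrow> 0) sequentially" for k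
  proof -
    have "((\<lambda>N. x ^ k * (1 - real (ff N k) / real N ^ k)) \<longlongrightarrow> x ^ k * (1 - 1)) sequentially"
      by (intro tendsto_intros ff_ratio_lim)
    then show ?thesis by simp
  qed
  have bnd: "eventually (\<lambda>(k, N). norm (x ^ k * (1 - real (ff N k) / real N ^ k)) \<le> x ^ k) (at_top \<times>\<^sub>F sequentially)"
  proof (intro always_eventually allI)
    fix p :: "nat \<times> nat"
    obtain k N where p: "p = (k, N)" by (cases p)
    have "0 \<le> 1 - real (ff N k) / real N ^ k" "1 - real (ff N k) / real N ^ k \<le> 1"
      using ff_ratio_bounds[of N k] by auto
    then have "x ^ k * (1 - real (ff N k) / real N ^ k) \<le> x ^ k * 1" "0 \<le> x ^ k * (1 - real (ff N k) / real N ^ k)"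
      using assms by (intro mult_left_mono, auto)
    then have "norm (x ^ k * (1 - real (ff N k) / real N ^ k)) \<le> x ^ k"
      by simp
    then show "(\<lambda>(k, N). norm (x ^ k * (1 - real (ff N k) / real N ^ k)) \<le> x ^ k) p"
      unfolding p by simp
  qed
  have sm: "summable (\<lambda>k. x ^ k)" using assms by (intro summable_geometric) simp
  from tannerys_theorem[OF lim bnd sm] show ?thesis by simp
qed

lemma core:
  fixes c \<rho> e :: real and I :: "'i set" and G :: "'i \<Rightarrow> complex \<Rightarrow> complex"
    and I' :: "'j set" and \<epsilon> :: "'j \<Rightarrow> nat \<Rightarrow> real" and E :: "nat \<Rightarrow> real" and K :: "complex set"
  assumes c: "0 \<le> c" "c < 1" and rho: "max c (1 - c) < \<rho>"
    and holo: "\<forall>\<iota>\<in>I. G \<iota> holomorphic_on ball (complex_of_real c) \<rho>"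
    and bdd: "bounded_family_on I G (ball (complex_of_real c) \<rho>)"
    and eps: "\<forall>\<iota>'\<in>I'. \<forall>N\<ge>1. 0 \<le> \<epsilon> \<iota>' N \<and> \<epsilon> \<iota>' N \<le> E N"
    and E: "E \<longlonglongrightarrow> 0"
    and K: "compact K" "K \<subseteq> ball (complex_of_real c) \<rho>"
    and e: "e > 0"
  shows "\<exists>N0. \<forall>N\<ge>N0. \<forall>\<iota>\<in>I. \<forall>\<iota>'\<in>I'. \<forall>z\<in>K.
           norm (bernstein_poly (G \<iota>) (\<epsilon> \<iota>' N) N z - G \<iota> z) < e"
proof -
  define C where "C = complex_of_real c"
  define m where "m = max c (1 - c)"
  have m: "c \<le> m" "1 - c \<le> m" "1/2 \<le> m" "m < \<rho>" using rho unfolding m_def by (auto simp: max_def)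
  obtain r' where r': "0 \<le> r'" "r' < \<rho>" "\<forall>z\<in>K. cmod (z - C) \<le> r'"
  proof (cases "K = {}")
    case True
    then show ?thesis using that[of 0] m by auto
  next
    case False
    have "continuous_on K (dist C)" by (intro continuous_intros)
    then obtain x where x: "x \<in> K" "\<forall>y\<in>K. dist C y \<le> dist C x"
      using continuous_attains_sup[OF K(1) False, of "dist C"] by blast
    have "dist C x < \<rho>" using x(1) K(2) unfolding C_def by auto
    then show ?thesis using that[of "dist C x"] x(2) by (auto simp: dist_norm norm_minus_commute)
  qed
  define m' where "m' = max r' m"
  define d where "d = \<rho> - m'"
  have d: "d > 0" unfolding d_def m'_def using r' m by auto
  define q where "q = m' + d / 3"
  define r where "r = m' + 2 * d / 3"
  have m'1: "r' \<le> m'" "m \<le> m'" unfolding m'_def by auto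
  have qr: "r' \<le> m'" "m \<le> m'" "m' < q" "q < r" "r < \<rho>" "0 < q" "0 < r"
    using m'1 d m unfolding q_def r_def d_def by (auto simp: field_simps)
  define x where "x = q / r"
  have x: "0 \<le> x" "x < 1" unfolding x_def using qr by auto
  define B where "B = c + r'"
  have B: "\<forall>z\<in>K. cmod z \<le> B"
  proof
    fix z assume "z \<in> K"
    then have "cmod (z - C) \<le> r'" using r' by auto
    moreover have "cmod z \<le> cmod C + cmod (z - C)" using norm_triangle_ineq[of C "z - C"] by simp
    ultimately show "cmod z \<le> B" unfolding B_def C_def using c by simp
  qed
  have B0: "0 \<le> B" unfolding B_def using c r' by simp
  have sph: "compact (sphere C r)" "sphere C r \<subseteq> ball C \<rho>"
    using qr by (auto simp: dist_norm)
  obtain M0 where M0: "\<forall>\<iota>\<in>I. \<forall>w\<in>sphere C r. norm (G \<iota> w) \<le> M0"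
    using bdd sph unfolding bounded_family_on_def C_def by blast
  define M where "M = max M0 0"
  have M: "0 \<le> M" "\<forall>\<iota>\<in>I. \<forall>w\<in>sphere C r. norm (G \<iota> w) \<le> M"
    using M0 unfolding M_def by force+
  define a where "a \<iota> k = (deriv ^^ k) (G \<iota>) C / fact k" for \<iota> k
  have coef: "cmod (a \<iota> k) \<le> M / r ^ k" if \<iota>: "\<iota> \<in> I" for \<iota> k
  proof -
    have hol: "G \<iota> holomorphic_on ball C \<rho>" using holo \<iota> unfolding C_def by auto
    have "cball C r \<subseteq> ball C \<rho>" using qr by (auto simp: subset_eq dist_norm)
    then have contf: "continuous_on (cball C r) (G \<iota>)"
      using hol holomorphic_on_imp_continuous_on continuous_on_subset by blast
    have holr: "G \<iota> holomorphic_on ball C r"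
      using hol by (rule holomorphic_on_subset) (use qr in auto)
    have "norm ((deriv ^^ k) (G \<iota>) C) \<le> fact k * M / r ^ k"
    proof (rule Cauchy_inequality[OF holr contf])
      show "0 < r" using qr by simp
      fix w assume "cmod (C - w) = r"
      then have "w \<in> sphere C r" by (simp add: dist_norm)
      then show "cmod (G \<iota> w) \<le> M" using M \<iota> by blast
    qed
    then show ?thesis unfolding a_def norm_divide
      by (simp add: field_simps)
  qed
  have ser: "(\<lambda>k. a \<iota> k * (w - C) ^ k) sums G \<iota> w" if "\<iota> \<in> I" "w \<in> ball C \<rho>" for \<iota> w
    unfolding a_def using holomorphic_power_series[of "G \<iota>" C \<rho> w] holo that unfolding C_def by auto
  define S where "S N = 2 * M * (\<Sum>k. x ^ k * (1 - real (ff N k) / real N ^ k))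
       + M * (1 / (1 - (q + E N * B) / r) - 1 / (1 - x))" for N
  have "S \<longlonglongrightarrow> 2 * M * 0 + M * (1 / (1 - (q + 0 * B) / r) - 1 / (1 - x))"
    unfolding S_def using qr
    by (intro tendsto_intros tail_lim x E) auto
  then have S0: "S \<longlonglongrightarrow> 0" unfolding x_def by simp
  have ev1: "eventually (\<lambda>N. S N < e) sequentially"
    using order_tendstoD(2)[OF S0 e] .
  have EB0: "(\<lambda>N. E N * B) \<longlonglongrightarrow> 0" using tendsto_mult[OF E tendsto_const[of B]] by simp
  have ev2: "eventually (\<lambda>N. E N * B < d / 3) sequentially"
    using order_tendstoD(2)[OF EB0, of "d/3"] d by simp
  have ev3: "eventually (\<lambda>N. E N < 1 - c) sequentially"
    using order_tendstoD(2)[OF E, of "1 - c"] c by simp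
  obtain N0 where N0: "\<And>N. N \<ge> N0 \<Longrightarrow> S N < e \<and> E N * B < d / 3 \<and> E N < 1 - c \<and> N \<ge> 1"
    using eventually_conj[OF ev1 eventually_conj[OF ev2 eventually_conj[OF ev3 eventually_ge_at_top[of 1]]]]
    unfolding eventually_sequentially by blast
  show ?thesis
  proof (intro exI[of _ N0] allI impI ballI)
    fix N \<iota> \<iota>' z assume N: "N0 \<le> N" and \<iota>: "\<iota> \<in> I" and \<iota>': "\<iota>' \<in> I'" and z: "z \<in> K"
    from N0[OF N] have SN: "S N < e" and EB: "E N * B < d / 3" and Ec: "E N < 1 - c" and N1: "N \<ge> 1"
      by auto
    define ep where "ep = \<epsilon> \<iota>' N"
    have ep: "0 \<le> ep" "ep \<le> E N" using eps \<iota>' N1 unfolding ep_def by auto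
    define al where "al = 1 - ep"
    have al: "c \<le> al" "al \<le> 1" unfolding al_def using ep Ec by auto
    have zc: "cmod (z - C) \<le> r'" using r' z by auto
    have zB: "cmod z \<le> B" using B z by auto
    define \<delta> where "\<delta> = E N * B"
    have del: "cmod (complex_of_real al * z - z) \<le> \<delta>"
    proof -
      have "complex_of_real al * z - z = - (complex_of_real ep * z)" unfolding al_def by (simp add: algebra_simps)
      then have "cmod (complex_of_real al * z - z) = ep * cmod z" using ep by (simp add: norm_mult)
      also have "\<dots> \<le> E N * B" using ep zB by (intro mult_mono) auto
      finally show ?thesis unfolding \<delta>_def .
    qed
    have del0: "0 \<le> \<delta>" using del norm_ge_zero order_trans by blast
    have alz: "cmod (complex_of_real al * z - C) \<le> q"
    proof -
      have "cmod (complex_of_real al * z - C) \<le> cmod (z - C) + cmod (complex_of_real al * z - z)"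
        using norm_triangle_ineq[of "z - C" "complex_of_real al * z - z"] by simp
      also have "\<dots> \<le> r' + \<delta>" using zc del by simp
      also have "\<dots> \<le> q" using qr EB unfolding \<delta>_def q_def by simp
      finally show ?thesis .
    qed
    define w where "w \<nu> = complex_of_real (real \<nu> * al / real N)" for \<nu>
    have wball: "w \<nu> \<in> ball C \<rho>" if "\<nu> \<le> N" for \<nu>
    proof -
      have t0: "0 \<le> real \<nu> * al / real N" using al c by simp
      have "real \<nu> / real N \<le> 1" using that N1 by simp
      then have "real \<nu> / real N * al \<le> 1 * al" using al c by (intro mult_right_mono) auto
      then have t1: "real \<nu> * al / real N \<le> 1" using al by simp
      have "\<bar>real \<nu> * al / real N - c\<bar> \<le> m" using t0 t1 m by (auto simp: abs_if)
      moreover have "dist C (w \<nu>) = \<bar>c - real \<nu> * al / real N\<bar>"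
        unfolding w_def C_def dist_of_real dist_real_def ..
      ultimately show ?thesis using m by (simp add: abs_minus_commute)
    qed
    define T where "T k = (\<Sum>\<nu>=0..N. of_nat (N choose \<nu>) * z ^ \<nu> * (1 - z) ^ (N - \<nu>) * (w \<nu> - C) ^ k)" for k
    have P: "(\<lambda>k. a \<iota> k * T k) sums bernstein_poly (G \<iota>) ep N z"
    proof -
      have "(\<lambda>k. \<Sum>\<nu>=0..N. of_nat (N choose \<nu>) * z ^ \<nu> * (1 - z) ^ (N - \<nu>) * (a \<iota> k * (w \<nu> - C) ^ k))
          sums (\<Sum>\<nu>=0..N. of_nat (N choose \<nu>) * z ^ \<nu> * (1 - z) ^ (N - \<nu>) * G \<iota> (w \<nu>))"
        using ser[OF \<iota> wball] by (intro sums_sum sums_mult) auto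
      moreover have "(\<Sum>\<nu>=0..N. of_nat (N choose \<nu>) * z ^ \<nu> * (1 - z) ^ (N - \<nu>) * (a \<iota> k * (w \<nu> - C) ^ k))
          = a \<iota> k * T k" for k
        unfolding T_def sum_distrib_left by (intro sum.cong) (simp_all add: algebra_simps)
      moreover have "(\<Sum>\<nu>=0..N. of_nat (N choose \<nu>) * z ^ \<nu> * (1 - z) ^ (N - \<nu>) * G \<iota> (w \<nu>))
          = bernstein_poly (G \<iota>) ep N z"
        unfolding bernstein_poly_def w_def al_def ..
      ultimately show ?thesis by simp
    qed
    have Gz: "(\<lambda>k. a \<iota> k * (z - C) ^ k) sums G \<iota> z" using ser[OF \<iota>] z K(2) unfolding C_def by auto
    have diff: "(\<lambda>k. a \<iota> k * (T k - (z - C) ^ k)) sums (bernstein_poly (G \<iota>) ep N z - G \<iota> z)"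
      using sums_diff[OF P Gz] by (simp add: right_diff_distrib)
    define y where "y = (q + \<delta>) / r"
    have y: "norm y < 1" unfolding y_def using qr EB del0 unfolding \<delta>_def q_def r_def by auto
    define g where "g k = 2 * M * (x ^ k * (1 - real (ff N k) / real N ^ k)) + M * (y ^ k - x ^ k)" for k
    have gs: "g sums S N"
    proof -
      have s1: "(\<lambda>k. x ^ k * (1 - real (ff N k) / real N ^ k)) sums (\<Sum>k. x ^ k * (1 - real (ff N k) / real N ^ k))"
      proof (rule summable_sums, rule summable_comparison_test)
        show "\<exists>N0. \<forall>n\<ge>N0. norm (x ^ n * (1 - real (ff N n) / real N ^ n)) \<le> x ^ n"
        proof (intro exI allI impI)
          fix n :: nat
          have "0 \<le> 1 - real (ff N n) / real N ^ n" "1 - real (ff N n) / real N ^ n \<le> 1"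
            using ff_ratio_bounds[of N n] by auto
          then have "x ^ n * (1 - real (ff N n) / real N ^ n) \<le> x ^ n * 1" "0 \<le> x ^ n * (1 - real (ff N n) / real N ^ n)"
            using x by (intro mult_left_mono, auto)
          then show "norm (x ^ n * (1 - real (ff N n) / real N ^ n)) \<le> x ^ n"
            by simp
        qed
        show "summable (\<lambda>n. x ^ n)" using x by (intro summable_geometric) simp
      qed
      have s2: "(\<lambda>k. y ^ k) sums (1 / (1 - y))" using geometric_sums[OF y] by simp
      have s3: "(\<lambda>k. x ^ k) sums (1 / (1 - x))" using geometric_sums[of x] x by simp
      have "g sums (2 * M * (\<Sum>k. x ^ k * (1 - real (ff N k) / real N ^ k)) + M * (1 / (1 - y) - 1 / (1 - x)))"
        unfolding g_def by (intro sums_add sums_mult sums_diff s1 s2 s3)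
      moreover have "1 / (1 - y) = 1 / (1 - (q + E N * B) / r)" unfolding y_def \<delta>_def ..
      ultimately show ?thesis unfolding S_def by simp
    qed
    have termb: "norm (a \<iota> k * (T k - (z - C) ^ k)) \<le> g k" for k
    proof -
      have Tb: "cmod (T k - (complex_of_real al * z - C) ^ k) \<le> 2 * q ^ k * (1 - real (ff N k) / real N ^ k)"
        unfolding T_def w_def C_def
        using T_bound[OF N1 c(1) al(1), of q z k] al m qr alz unfolding C_def by auto
      have Pb: "cmod ((complex_of_real al * z - C) ^ k - (z - C) ^ k) \<le> (q + \<delta>) ^ k - q ^ k"
      proof -
        have Yq: "cmod (z - C) \<le> q" using zc qr by linarith
        have "cmod ((complex_of_real al * z - C) ^ k - (z - C) ^ k)
            \<le> (q + cmod (complex_of_real al * z - z)) ^ k - q ^ k"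
          using pow_diff_bound[OF Yq, of "complex_of_real al * z - C" k] by simp
        also have "\<dots> \<le> (q + \<delta>) ^ k - q ^ k"
          using del qr by (intro diff_right_mono power_mono) auto
        finally show ?thesis .
      qed
      have "cmod (T k - (z - C) ^ k) \<le> 2 * q ^ k * (1 - real (ff N k) / real N ^ k) + ((q + \<delta>) ^ k - q ^ k)"
        using norm_triangle_ineq[of "T k - (complex_of_real al * z - C) ^ k" "(complex_of_real al * z - C) ^ k - (z - C) ^ k"]
          Tb Pb by simp
      then have "norm (a \<iota> k * (T k - (z - C) ^ k)) \<le> M / r ^ k * (2 * q ^ k * (1 - real (ff N k) / real N ^ k) + ((q + \<delta>) ^ k - q ^ k))"
        unfolding norm_mult using coef[OF \<iota>, of k] M(1) qr by (intro mult_mono) auto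
      also have "\<dots> = g k"
        unfolding g_def x_def y_def using qr by (simp add: power_divide field_simps)
      finally show ?thesis .
    qed
    have "norm (bernstein_poly (G \<iota>) ep N z - G \<iota> z) \<le> S N"
      using norm_suminf_le[OF termb sums_summable[OF gs]] sums_unique[OF diff] sums_unique[OF gs] by simp
    then show "norm (bernstein_poly (G \<iota>) (\<epsilon> \<iota>' N) N z - G \<iota> z) < e"
      using SN unfolding ep_def by simp
  qed
qed

lemma compact_radius:
  fixes K :: "complex set"
  assumes K: "compact K" "K \<subseteq> ball C \<rho>" and \<rho>: "0 < \<rho>"
  obtains r' where "0 \<le> r'" "r' < \<rho>" "\<forall>z\<in>K. cmod (z - C) \<le> r'"
proof (cases "K = {}")
  case True
  then show ?thesis using that[of 0] \<rho> by auto
next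
  case False
  have "continuous_on K (dist C)" by (intro continuous_intros)
  then obtain x where x: "x \<in> K" "\<forall>y\<in>K. dist C y \<le> dist C x"
    using continuous_attains_sup[OF K(1) False, of "dist C"] by blast
  have "dist C x < \<rho>" using x(1) K(2) by auto
  then show ?thesis using that[of "dist C x"] x(2) by (auto simp: dist_norm norm_minus_commute)
qed

lemma core_all:
  fixes c \<rho> :: real and I :: "'i set" and G :: "'i \<Rightarrow> complex \<Rightarrow> complex"
    and I' :: "'j set" and \<epsilon> :: "'j \<Rightarrow> nat \<Rightarrow> real" and E :: "nat \<Rightarrow> real" and K :: "complex set"
  assumes c: "0 \<le> c" "c \<le> 1" and rho: "max c (1 - c) < \<rho>"
    and holo: "\<forall>\<iota>\<in>I. G \<iota> holomorphic_on ball (complex_of_real c) \<rho>"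
    and bdd: "bounded_family_on I G (ball (complex_of_real c) \<rho>)"
    and eps: "\<forall>\<iota>'\<in>I'. \<forall>N\<ge>1. 0 \<le> \<epsilon> \<iota>' N \<and> \<epsilon> \<iota>' N \<le> E N"
    and E: "E \<longlonglongrightarrow> 0"
    and K: "compact K" "K \<subseteq> ball (complex_of_real c) \<rho>"
    and e: "e > 0"
  shows "\<exists>N0. \<forall>N\<ge>N0. \<forall>\<iota>\<in>I. \<forall>\<iota>'\<in>I'. \<forall>z\<in>K.
           norm (bernstein_poly (G \<iota>) (\<epsilon> \<iota>' N) N z - G \<iota> z) < e"
proof (cases "c < 1")
  case True
  then show ?thesis using core[OF c(1) True rho holo bdd eps E K e] by blast
next
  case False
  then have c1: "c = 1" using c by simp
  have \<rho>1: "1 < \<rho>" using rho c1 by simp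
  obtain r' where r': "0 \<le> r'" "r' < \<rho>" "\<forall>z\<in>K. cmod (z - complex_of_real c) \<le> r'"
    using compact_radius[OF K] \<rho>1 by auto
  define \<eta> where "\<eta> = min ((\<rho> - r') / 3) (1/4)"
  have \<eta>: "0 < \<eta>" "\<eta> \<le> 1/4" "3 * \<eta> \<le> \<rho> - r'" using r' unfolding \<eta>_def by (auto simp: min_def field_simps)
  define c0 where "c0 = 1 - \<eta>"
  define \<rho>0 where "\<rho>0 = \<rho> - \<eta>"
  have c0: "0 \<le> c0" "c0 < 1" unfolding c0_def using \<eta> by auto
  have rho0: "max c0 (1 - c0) < \<rho>0" unfolding c0_def \<rho>0_def using \<eta> \<rho>1 by auto
  have sub: "ball (complex_of_real c0) \<rho>0 \<subseteq> ball (complex_of_real c) \<rho>"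
  proof
    fix w assume "w \<in> ball (complex_of_real c0) \<rho>0"
    then have "dist (complex_of_real c0) w < \<rho>0" by simp
    moreover have "dist (complex_of_real c) (complex_of_real c0) = \<eta>"
      unfolding dist_of_real dist_real_def c1 c0_def using \<eta> by simp
    ultimately have "dist (complex_of_real c) w < \<rho>"
      using dist_triangle[of "complex_of_real c" w "complex_of_real c0"] unfolding \<rho>0_def by linarith
    then show "w \<in> ball (complex_of_real c) \<rho>" by simp
  qed
  have K0: "K \<subseteq> ball (complex_of_real c0) \<rho>0"
  proof
    fix z assume z: "z \<in> K"
    then have "dist (complex_of_real c) z \<le> r'" using r' by (simp add: dist_norm norm_minus_commute)
    moreover have "dist (complex_of_real c0) (complex_of_real c) = \<eta>"
      unfolding dist_of_real dist_real_def c1 c0_def using \<eta> by simp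
    ultimately have "dist (complex_of_real c0) z \<le> \<eta> + r'"
      using dist_triangle[of "complex_of_real c0" z "complex_of_real c"] by linarith
    then show "z \<in> ball (complex_of_real c0) \<rho>0" unfolding \<rho>0_def using \<eta> by simp
  qed
  have holo0: "\<forall>\<iota>\<in>I. G \<iota> holomorphic_on ball (complex_of_real c0) \<rho>0"
    using holo sub holomorphic_on_subset by blast
  have bdd0: "bounded_family_on I G (ball (complex_of_real c0) \<rho>0)"
    using bdd sub unfolding bounded_family_on_def by blast
  show ?thesis using core[OF c0 rho0 holo0 bdd0 eps E K(1) K0 e] .
qed

theorem mainTheorem1:
  fixes c \<rho> :: real
    and I :: "'i set" and G :: "'i \<Rightarrow> complex \<Rightarrow> complex"
    and I' :: "'j set" and \<epsilon> :: "'j \<Rightarrow> nat \<Rightarrow> real"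
  assumes c: "0 \<le> c" "c \<le> 1"
    and rho: "\<rho> > max c (1 - c)"
    and holo: "\<forall>\<iota>\<in>I. G \<iota> holomorphic_on ball (complex_of_real c) \<rho>"
    and bdd: "bounded_family_on I G (ball (complex_of_real c) \<rho>)"
    and eps_range: "\<forall>\<iota>'\<in>I'. \<forall>N\<ge>1. \<epsilon> \<iota>' N \<in> {0..1}"
    and eps_lim: "(\<lambda>N. SUP \<iota>'\<in>I'. \<epsilon> \<iota>' N) \<longlonglongrightarrow> 0"
  shows "(\<forall>\<iota>\<in>I. \<forall>\<iota>'\<in>I'. \<forall>K. compact K \<and> K \<subseteq> ball (complex_of_real c) \<rho> \<longrightarrow>
            uniform_limit K (\<lambda>N. bernstein_poly (G \<iota>) (\<epsilon> \<iota>' N) N) (G \<iota>) sequentially)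
       \<and> (\<forall>K. compact K \<and> K \<subseteq> ball (complex_of_real c) \<rho> \<longrightarrow>
            (\<forall>e>0. \<exists>N0. \<forall>N\<ge>N0. \<forall>\<iota>\<in>I. \<forall>\<iota>'\<in>I'. \<forall>z\<in>K.
               norm (bernstein_poly (G \<iota>) (\<epsilon> \<iota>' N) N z - G \<iota> z) < e))"
proof -
  define E where "E N = (SUP \<iota>'\<in>I'. \<epsilon> \<iota>' N)" for N
  have E: "E \<longlonglongrightarrow> 0" using eps_lim unfolding E_def .
  have eps: "\<forall>\<iota>'\<in>I'. \<forall>N\<ge>1. 0 \<le> \<epsilon> \<iota>' N \<and> \<epsilon> \<iota>' N \<le> E N"
  proof (intro ballI allI impI conjI)
    fix \<iota>' N assume \<iota>': "\<iota>' \<in> I'" and N: "1 \<le> (N::nat)"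
    show "0 \<le> \<epsilon> \<iota>' N" using eps_range \<iota>' N by auto
    have "bdd_above ((\<lambda>\<iota>'. \<epsilon> \<iota>' N) ` I')"
      using eps_range N by (intro bdd_aboveI2[where M=1]) auto
    then show "\<epsilon> \<iota>' N \<le> E N" unfolding E_def using \<iota>' by (rule cSUP_upper[rotated])
  qed
  have rho': "max c (1 - c) < \<rho>" using rho by simp
  have U: "\<forall>K. compact K \<and> K \<subseteq> ball (complex_of_real c) \<rho> \<longrightarrow>
            (\<forall>e>0. \<exists>N0. \<forall>N\<ge>N0. \<forall>\<iota>\<in>I. \<forall>\<iota>'\<in>I'. \<forall>z\<in>K.
               norm (bernstein_poly (G \<iota>) (\<epsilon> \<iota>' N) N z - G \<iota> z) < e)"
    using core_all[OF c rho' holo bdd eps E] by blast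
  show ?thesis
  proof (intro conjI U ballI allI impI)
    fix \<iota> \<iota>' K assume \<iota>: "\<iota> \<in> I" and \<iota>': "\<iota>' \<in> I'" and K: "compact K \<and> K \<subseteq> ball (complex_of_real c) \<rho>"
    show "uniform_limit K (\<lambda>N. bernstein_poly (G \<iota>) (\<epsilon> \<iota>' N) N) (G \<iota>) sequentially"
      unfolding uniform_limit_sequentially_iff
    proof (intro allI impI)
      fix e :: real assume e: "e > 0"
      obtain N0 where N0: "\<forall>N\<ge>N0. \<forall>\<iota>\<in>I. \<forall>\<iota>'\<in>I'. \<forall>z\<in>K.
               norm (bernstein_poly (G \<iota>) (\<epsilon> \<iota>' N) N z - G \<iota> z) < e"
        using U K e by blast
      show "\<exists>N. \<forall>n\<ge>N. \<forall>x\<in>K. dist (bernstein_poly (G \<iota>) (\<epsilon> \<iota>' n) n x) (G \<iota> x) < e"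
        using N0 \<iota> \<iota>' unfolding dist_norm by blast
    qed
  qed
qed

end
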